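(* Let $U:\mathbb{R}^d\to\mathbb{R}$ be twice continuously differentiable with $\nabla U(0)=0$ and $\sup_x\|\mathrm{D}^2U(x)\|\le\mathtt{L}$, and assume there exist $\mathtt{m}>0$, $\mathtt{K}\ge0$ with $\mathrm{D}^2U(x)[y,y]\ge\mathtt{m}$ whenever $\|x\|\ge\mathtt{K}$, $\|y\|=1$. Let $\bar\gamma\in(0,\mathtt{m}/(4\mathtt{L}^2)]$, $\tilde{\mathtt{K}}=2\mathtt{K}(1+\mathtt{L}/\mathtt{m})$ and $\tilde b^{\mathrm U}_{\bar\gamma}=2d+[\max(\tilde{\mathtt{K}},2\sqrt{2d/\mathtt{m}})]^2(\bar\gamma\mathtt{L}^2+2\mathtt{L}+\mathtt{m}/2)$. Then for any $\gamma\in(0,\bar\gamma]$ and $x\in\mathbb{R}^d$, $$\int_{\mathbb{R}^d}\|y\|^2Q_\gamma(x,dy)\le\{1-\mathtt{m}\gamma/2\}\|x\|^2+\gamma\tilde b^{\mathrm U}_{\bar\gamma}.$$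
   Context: $Q_\gamma(x,A)=\int\mathbb{1}_A(x-\gamma\nabla U(x)+\sqrt{2\gamma}z)\varphi(z)dz$ is the unadjusted Langevin kernel, $\varphi$ the standard Gaussian density on $\mathbb{R}^d$. *)

theory Defs
  imports "HOL-Probability.Probability"
begin

definition std_gauss_dens :: "real^'n \<Rightarrow> real" where
  "std_gauss_dens z = (2 * pi) powr (- real CARD('n) / 2) * exp (- (norm z)\<^sup>2 / 2)"

definition ULA_kernel :: "(real^'n \<Rightarrow> real^'n) \<Rightarrow> real \<Rightarrow> real^'n \<Rightarrow> (real^'n) measure" where
  "ULA_kernel gradU \<gamma> x =
     distr (density lborel (\<lambda>z. ennreal (std_gauss_dens z))) borel
       (\<lambda>z. x - \<gamma> *\<^sub>R gradU x + sqrt (2 * \<gamma>) *\<^sub>R z)"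

end

theory Submission imports Defs begin

lemma card_Basis_vec: "card (Basis :: (real^'n) set) = CARD('n)"
  using DIM_cart[where 'a=real and 'b='n] by simp

lemma gauss_prod: "std_gauss_dens (z::real^'n) = (\<Prod>b\<in>Basis. std_normal_density (z \<bullet> b))"
proof -
  have n: "(norm z)\<^sup>2 = (\<Sum>b\<in>Basis. (z \<bullet> b)\<^sup>2)"
  proof -
    have "(norm z)\<^sup>2 = z \<bullet> z" by (rule power2_norm_eq_inner)
    also have "\<dots> = (\<Sum>b\<in>Basis. (z \<bullet> b)\<^sup>2)"
      by (subst euclidean_inner) (simp add: power2_eq_square)
    finally show ?thesis .
  qed
  have e: "exp (- (norm z)\<^sup>2 / 2) = (\<Prod>b\<in>Basis. exp (- (z \<bullet> b)\<^sup>2 / 2))"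
    by (simp add: n exp_sum[symmetric] sum_negf sum_divide_distrib)
  have c: "(2 * pi) powr (- real CARD('n) / 2) = (\<Prod>b\<in>(Basis::(real^'n) set). 1 / sqrt (2 * pi))"
  proof -
    have "(\<Prod>b\<in>(Basis::(real^'n) set). 1 / sqrt (2 * pi)) = (1 / sqrt (2*pi)) ^ CARD('n)"
      by (simp add: card_Basis_vec)
    moreover have h1: "1 / sqrt (2*pi) = (2*pi) powr (-(1/2))"
      by (simp only: powr_minus_divide powr_half_sqrt[symmetric] pi_ge_zero mult_nonneg_nonneg zero_le_numeral)
    moreover have h2: "((2*pi) powr (-(1/2))) ^ CARD('n) = (2 * pi) powr (- real CARD('n) / 2)"
      by (subst powr_power) auto
    ultimately show ?thesis by metis
  qed
  show ?thesis unfolding std_gauss_dens_def std_normal_density_def c e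
    by (rule prod.distrib[symmetric])
qed

lemma nn_std0: "(\<integral>\<^sup>+t. ennreal (std_normal_density t) \<partial>lborel) = 1"
proof -
  have "(\<integral>\<^sup>+t. ennreal (std_normal_density t * t^(2*0)) \<partial>lborel) = ennreal (fact (2 * 0) / (2^0 * fact 0))"
    using std_normal_moment_even[of 0]
    by (subst nn_integral_eq_integral) (auto simp: has_bochner_integral_iff normal_density_nonneg)
  then show ?thesis by simp
qed

lemma nn_std2: "(\<integral>\<^sup>+t. ennreal (std_normal_density t * t^2) \<partial>lborel) = 1"
proof -
  have "(\<integral>\<^sup>+t. ennreal (std_normal_density t * t^(2*1)) \<partial>lborel) = ennreal (fact (2 * 1) / (2^1 * fact 1))"
    using std_normal_moment_even[of 1]
    by (subst nn_integral_eq_integral) (auto simp: has_bochner_integral_iff normal_density_nonneg)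
  then show ?thesis by simp
qed

lemma gauss_meas[measurable]: "std_gauss_dens \<in> borel_measurable borel"
  unfolding std_gauss_dens_def by measurable

lemma gauss_nonneg: "std_gauss_dens z \<ge> 0"
  unfolding std_gauss_dens_def by simp

lemma gauss_int1: "(\<integral>\<^sup>+z. ennreal (std_gauss_dens (z::real^'n)) \<partial>lborel) = 1"
proof -
  have "(\<integral>\<^sup>+z. ennreal (std_gauss_dens (z::real^'n)) \<partial>lborel)
     = (\<integral>\<^sup>+z. (\<Prod>b\<in>Basis. (\<lambda>b t. ennreal (std_normal_density t)) b ((z::real^'n) \<bullet> b)) \<partial>lborel)"
  proof -
    have "\<And>z::real^'n. ennreal (std_gauss_dens z) = (\<Prod>b\<in>Basis. (\<lambda>b t. ennreal (std_normal_density t)) b (z \<bullet> b))"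
      by (simp add: gauss_prod prod_ennreal normal_density_nonneg)
    then show ?thesis by simp
  qed
  also have "\<dots> = (\<Prod>b\<in>(Basis::(real^'n) set). (\<integral>\<^sup>+t. ennreal (std_normal_density t) \<partial>lborel))"
    by (rule nn_integral_lborel_prod) auto
  finally show ?thesis by (simp add: nn_std0)
qed

lemma gauss_int2: "(\<integral>\<^sup>+z. ennreal (std_gauss_dens (z::real^'n)) * ennreal ((norm z)\<^sup>2) \<partial>lborel) = CARD('n)"
proof -
  have n: "\<And>z::real^'n. (norm z)\<^sup>2 = (\<Sum>b\<in>Basis. (z \<bullet> b)\<^sup>2)"
  proof -
    fix z :: "real^'n"
    have "(norm z)\<^sup>2 = z \<bullet> z" by (rule power2_norm_eq_inner)
    also have "\<dots> = (\<Sum>b\<in>Basis. (z \<bullet> b)\<^sup>2)"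
      by (subst euclidean_inner) (simp add: power2_eq_square)
    finally show "(norm z)\<^sup>2 = (\<Sum>b\<in>Basis. (z \<bullet> b)\<^sup>2)" .
  qed
  have eq: "\<And>z::real^'n. ennreal (std_gauss_dens z) * ennreal ((norm z)\<^sup>2)
     = (\<Sum>c\<in>Basis. (\<Prod>b\<in>Basis. (\<lambda>b t. ennreal (std_normal_density t * (if b = c then t\<^sup>2 else 1))) b (z \<bullet> b)))"
  proof -
    fix z :: "real^'n"
    have "std_gauss_dens z * (norm z)\<^sup>2 = (\<Sum>c\<in>Basis. std_gauss_dens z * (z \<bullet> c)\<^sup>2)"
      by (simp add: n sum_distrib_left)
    also have "\<dots> = (\<Sum>c\<in>Basis. (\<Prod>b\<in>Basis. std_normal_density (z \<bullet> b) * (if b = c then (z \<bullet> b)\<^sup>2 else 1)))"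
    proof (rule sum.cong)
      fix c :: "real^'n" assume c: "c \<in> Basis"
      have "(\<Prod>b\<in>Basis. std_normal_density (z \<bullet> b) * (if b = c then (z \<bullet> b)\<^sup>2 else 1))
          = std_gauss_dens z * (\<Prod>b\<in>Basis. (if b = c then (z \<bullet> b)\<^sup>2 else 1))"
        by (simp add: prod.distrib gauss_prod)
      also have "(\<Prod>b\<in>Basis. (if b = c then (z \<bullet> b)\<^sup>2 else 1)) = (z \<bullet> c)\<^sup>2"
        using c by (simp add: prod.delta)
      finally show "std_gauss_dens z * (z \<bullet> c)\<^sup>2 = (\<Prod>b\<in>Basis. std_normal_density (z \<bullet> b) * (if b = c then (z \<bullet> b)\<^sup>2 else 1))"
        by simp
    qed simp
    finally show "?thesis z"
      by (simp add: ennreal_mult''[symmetric] gauss_nonneg sum_ennreal[symmetric] prod_ennreal[symmetric]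
          normal_density_nonneg prod_nonneg sum_nonneg)
  qed
  have "(\<integral>\<^sup>+z. ennreal (std_gauss_dens (z::real^'n)) * ennreal ((norm z)\<^sup>2) \<partial>lborel)
     = (\<Sum>c\<in>(Basis::(real^'n) set). \<integral>\<^sup>+z. (\<Prod>b\<in>Basis. (\<lambda>b t. ennreal (std_normal_density t * (if b = c then t\<^sup>2 else 1))) b (z \<bullet> b)) \<partial>lborel)"
    unfolding eq by (rule nn_integral_sum) auto
  also have "\<dots> = (\<Sum>c\<in>(Basis::(real^'n) set). (\<Prod>b\<in>(Basis::(real^'n) set). \<integral>\<^sup>+t. ennreal (std_normal_density t * (if b = c then t\<^sup>2 else 1)) \<partial>lborel))"
    by (intro sum.cong refl nn_integral_lborel_prod) (auto simp: normal_density_nonneg)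
  also have "\<dots> = (\<Sum>c\<in>(Basis::(real^'n) set). 1)"
    apply (intro sum.cong refl prod.neutral)
    apply (intro ballI)
    subgoal for c b by (cases "b = c") (simp_all add: nn_std0 nn_std2)
    done
  finally show ?thesis by (simp add: card_Basis_vec)
qed


lemma lborel_neg:
  fixes f :: "real^'n \<Rightarrow> ennreal"
  assumes f[measurable]: "f \<in> borel_measurable borel"
  shows "(\<integral>\<^sup>+z. f z \<partial>lborel) = (\<integral>\<^sup>+z. f (-z) \<partial>lborel)"
  by (subst lborel_affine[of "-1" 0]) (simp_all add: nn_integral_density nn_integral_distr)

lemma parallelogram:
  fixes a z :: "real^'n"
  shows "(norm (a + s *\<^sub>R z))\<^sup>2 + (norm (a - s *\<^sub>R z))\<^sup>2 = 2 * (norm a)\<^sup>2 + 2 * s\<^sup>2 * (norm z)\<^sup>2"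
  unfolding power2_norm_eq_inner
  by (simp add: inner_add_left inner_add_right inner_diff_left inner_diff_right
      power2_eq_square algebra_simps)

lemma gauss_shift:
  fixes a :: "real^'n"
  shows "(\<integral>\<^sup>+z. ennreal (std_gauss_dens z) * ennreal ((norm (a + s *\<^sub>R z))\<^sup>2) \<partial>lborel)
    = ennreal ((norm a)\<^sup>2 + s\<^sup>2 * CARD('n))" (is "?I = _")
proof -
  have sym: "std_gauss_dens (-z) = std_gauss_dens z" for z :: "real^'n"
    by (simp add: std_gauss_dens_def)
  have I2: "?I = (\<integral>\<^sup>+z. ennreal (std_gauss_dens z) * ennreal ((norm (a - s *\<^sub>R z))\<^sup>2) \<partial>lborel)"
    by (subst lborel_neg) (simp_all add: sym)
  have pw: "ennreal (std_gauss_dens z) * ennreal ((norm (a + s *\<^sub>R z))\<^sup>2)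
      + ennreal (std_gauss_dens z) * ennreal ((norm (a - s *\<^sub>R z))\<^sup>2)
      = ennreal (2 * (norm a)\<^sup>2) * ennreal (std_gauss_dens z)
        + ennreal (2 * s\<^sup>2) * (ennreal (std_gauss_dens z) * ennreal ((norm z)\<^sup>2))" for z :: "real^'n"
  proof -
    have "std_gauss_dens z * (norm (a + s *\<^sub>R z))\<^sup>2 + std_gauss_dens z * (norm (a - s *\<^sub>R z))\<^sup>2
       = (2 * (norm a)\<^sup>2) * std_gauss_dens z + (2 * s\<^sup>2) * (std_gauss_dens z * (norm z)\<^sup>2)"
      by (simp only: distrib_left[symmetric] parallelogram) (simp add: algebra_simps)
    then show ?thesis
      by (simp add: ennreal_mult''[symmetric] ennreal_plus[symmetric] gauss_nonneg del: ennreal_plus)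
  qed
  have "?I + ?I = (\<integral>\<^sup>+z. ennreal (std_gauss_dens z) * ennreal ((norm (a + s *\<^sub>R z))\<^sup>2)
      + ennreal (std_gauss_dens z) * ennreal ((norm (a - s *\<^sub>R z))\<^sup>2) \<partial>lborel)"
    by (subst I2, subst nn_integral_add) auto
  also have "\<dots> = (\<integral>\<^sup>+z. ennreal (2 * (norm a)\<^sup>2) * ennreal (std_gauss_dens z)
        + ennreal (2 * s\<^sup>2) * (ennreal (std_gauss_dens (z::real^'n)) * ennreal ((norm z)\<^sup>2)) \<partial>lborel)"
    by (simp only: pw)
  also have "\<dots> = ennreal (2 * (norm a)\<^sup>2) * 1 + ennreal (2 * s\<^sup>2) * CARD('n)"
    by (subst nn_integral_add) (auto simp: nn_integral_cmult gauss_int1 gauss_int2)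
  also have "\<dots> = ennreal (2 * (norm a)\<^sup>2 + real CARD('n) * (2 * s\<^sup>2))"
    by (simp add: ennreal_mult''[symmetric] ennreal_plus[symmetric] algebra_simps ennreal_of_nat_eq_real_of_nat del: ennreal_plus)
  also have "\<dots> = ennreal ((norm a)\<^sup>2 + s\<^sup>2 * CARD('n)) * ennreal 2"
    by (subst ennreal_mult[symmetric]) (auto simp: algebra_simps)
  finally have "?I * ennreal 2 = ennreal ((norm a)\<^sup>2 + s\<^sup>2 * CARD('n)) * ennreal 2"
    by (simp add: mult_2_right)
  then show ?thesis by (subst (asm) mult_right_ennreal_cancel) simp
qed

theorem lemma5:
  fixes U :: "real^'n \<Rightarrow> real"
    and gradU :: "real^'n \<Rightarrow> real^'n"
    and hessU :: "real^'n \<Rightarrow> real^'n^'n"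
    and L m K \<gamma>bar \<gamma> :: real
    and x :: "real^'n"
  assumes grad: "\<And>x. (U has_derivative (\<lambda>h. gradU x \<bullet> h)) (at x)"
    and hess: "\<And>x. (gradU has_derivative (\<lambda>h. hessU x *v h)) (at x)"
    and hess_cont: "continuous_on UNIV hessU"
    and grad0: "gradU 0 = 0"
    and Lbound: "\<And>x. onorm (\<lambda>h. hessU x *v h) \<le> L"
    and m_pos: "m > 0" and K_nonneg: "K \<ge> 0"
    and convex_out: "\<And>x y. norm x \<ge> K \<Longrightarrow> norm y = 1 \<Longrightarrow> y \<bullet> (hessU x *v y) \<ge> m"
    and gbar: "0 < \<gamma>bar" "\<gamma>bar \<le> m / (4 * L\<^sup>2)"
    and g: "0 < \<gamma>" "\<gamma> \<le> \<gamma>bar"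
  shows "(\<integral>\<^sup>+ y. ennreal ((norm y)\<^sup>2) \<partial>ULA_kernel gradU \<gamma> x)
     \<le> ennreal ((1 - m * \<gamma> / 2) * (norm x)\<^sup>2 + \<gamma> *
          (2 * real CARD('n) +
           (max (2 * K * (1 + L / m)) (2 * sqrt (2 * real CARD('n) / m)))\<^sup>2
             * (\<gamma>bar * L\<^sup>2 + 2 * L + m / 2)))"
proof -
  let ?N = "norm x"
  define a where "a = x - \<gamma> *\<^sub>R gradU x"
  define M where "M = max (2 * K * (1 + L / m)) (2 * sqrt (2 * real CARD('n) / m))"
  define C where "C = \<gamma>bar * L\<^sup>2 + 2 * L + m / 2"
  define Kt where "Kt = 2 * K * (1 + L / m)"
  have blH: "bounded_linear (\<lambda>h. hessU p *v h)" for p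
    by (rule matrix_vector_mul_bounded_linear)
  have L0: "L \<ge> 0" using onorm_pos_le[OF blH, of 0] Lbound[of 0] by linarith
  have Lne: "L \<noteq> 0"
  proof
    assume "L = 0" then show False using gbar by simp
  qed
  have L2: "\<gamma>bar * L\<^sup>2 \<le> m / 4"
  proof -
    have "0 < L\<^sup>2" using Lne by simp
    then have "\<gamma>bar * L\<^sup>2 \<le> m / (4 * L\<^sup>2) * L\<^sup>2" using gbar(2) by (intro mult_right_mono) auto
    also have "\<dots> = m / 4" using \<open>0 < L\<^sup>2\<close> by (simp add: field_simps)
    finally show ?thesis .
  qed
  have gL2: "\<gamma>\<^sup>2 * L\<^sup>2 \<le> \<gamma> * (m / 4)"
  proof -
    have "\<gamma>\<^sup>2 * L\<^sup>2 = \<gamma> * (\<gamma> * L\<^sup>2)" by (simp add: power2_eq_square)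
    also have "\<dots> \<le> \<gamma> * (\<gamma>bar * L\<^sup>2)" using g by (intro mult_left_mono mult_right_mono) auto
    also have "\<dots> \<le> \<gamma> * (m / 4)" using g L2 by (intro mult_left_mono) auto
    finally show ?thesis .
  qed
  have Hq: "\<bar>v \<bullet> (hessU p *v v)\<bar> \<le> L * (norm v)\<^sup>2" for v p
  proof -
    have "\<bar>v \<bullet> (hessU p *v v)\<bar> \<le> norm v * norm (hessU p *v v)" by (rule Cauchy_Schwarz_ineq2)
    also have "\<dots> \<le> norm v * (L * norm v)"
    proof (rule mult_left_mono)
      have "norm (hessU p *v v) \<le> onorm (\<lambda>h. hessU p *v h) * norm v" by (rule onorm[OF blH])
      also have "\<dots> \<le> L * norm v" using Lbound[of p] by (simp add: mult_right_mono)
      finally show "norm (hessU p *v v) \<le> L * norm v" .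
    qed simp
    finally show ?thesis by (simp add: power2_eq_square algebra_simps)
  qed
  have gradL: "norm (gradU x) \<le> L * ?N"
  proof -
    have "norm (gradU x - gradU 0) \<le> L * norm (x - 0)"
      by (rule differentiable_bound[where S=UNIV and f'="\<lambda>p h. hessU p *v h"]) (simp_all add: hess Lbound)
    then show ?thesis using grad0 by simp
  qed
  have gsq: "(norm (gradU x))\<^sup>2 \<le> L\<^sup>2 * ?N\<^sup>2"
    using power_mono[OF gradL norm_ge_zero, of 2] by (simp add: power_mult_distrib)
  have cs: "\<bar>x \<bullet> gradU x\<bar> \<le> L * ?N\<^sup>2"
  proof -
    have "\<bar>x \<bullet> gradU x\<bar> \<le> ?N * norm (gradU x)" by (rule Cauchy_Schwarz_ineq2)
    also have "\<dots> \<le> ?N * (L * ?N)" using gradL by (simp add: mult_left_mono)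
    finally show ?thesis by (simp add: power2_eq_square algebra_simps)
  qed
  have aexp: "(norm a)\<^sup>2 = ?N\<^sup>2 - 2 * \<gamma> * (x \<bullet> gradU x) + \<gamma>\<^sup>2 * (norm (gradU x))\<^sup>2"
    unfolding a_def power2_norm_eq_inner
    by (simp add: inner_diff_left inner_diff_right inner_commute power2_eq_square algebra_simps)
  have C0: "C \<ge> 0" unfolding C_def using L0 m_pos gbar by auto
  have KtM: "Kt \<le> M" unfolding Kt_def M_def by simp
  have Kt0: "0 \<le> Kt" unfolding Kt_def using K_nonneg L0 m_pos by auto
  have main: "(norm a)\<^sup>2 \<le> (1 - m * \<gamma> / 2) * ?N\<^sup>2 + \<gamma> * (M\<^sup>2 * C)"
  proof (cases "?N \<le> Kt")
    case True
    have c1: "- (2 * \<gamma> * (x \<bullet> gradU x)) \<le> 2 * \<gamma> * (L * ?N\<^sup>2)"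
    proof -
      have h: "- (x \<bullet> gradU x) \<le> L * ?N\<^sup>2" using abs_le_D2[OF cs] by linarith
      have "2 * \<gamma> * (- (x \<bullet> gradU x)) \<le> 2 * \<gamma> * (L * ?N\<^sup>2)"
        by (rule mult_left_mono[OF h]) (use g in simp)
      then show ?thesis by (simp only: mult_minus_right)
    qed
    have c2: "\<gamma>\<^sup>2 * (norm (gradU x))\<^sup>2 \<le> \<gamma> * (\<gamma>bar * L\<^sup>2) * ?N\<^sup>2"
    proof -
      have "\<gamma>\<^sup>2 * (norm (gradU x))\<^sup>2 \<le> \<gamma>\<^sup>2 * (L\<^sup>2 * ?N\<^sup>2)" using gsq by (intro mult_left_mono) auto
      also have "\<dots> = (\<gamma> * (\<gamma> * L\<^sup>2)) * ?N\<^sup>2" by (simp add: power2_eq_square mult_ac)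
      also have "\<dots> \<le> (\<gamma> * (\<gamma>bar * L\<^sup>2)) * ?N\<^sup>2" using g by (intro mult_right_mono mult_left_mono) auto
      finally show ?thesis .
    qed
    have "(norm a)\<^sup>2 \<le> ?N\<^sup>2 + 2 * \<gamma> * (L * ?N\<^sup>2) + \<gamma> * (\<gamma>bar * L\<^sup>2) * ?N\<^sup>2"
      unfolding aexp using c1 c2 by linarith
    also have "\<dots> = (1 - m * \<gamma> / 2) * ?N\<^sup>2 + \<gamma> * (?N\<^sup>2 * C)"
      unfolding C_def by (simp add: algebra_simps)
    also have "\<dots> \<le> (1 - m * \<gamma> / 2) * ?N\<^sup>2 + \<gamma> * (M\<^sup>2 * C)"
    proof -
      have "?N\<^sup>2 \<le> M\<^sup>2" using True KtM by (intro power_mono) auto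
      then show ?thesis using C0 g by (auto intro!: mult_left_mono mult_right_mono)
    qed
    finally show ?thesis .
  next
    case False
    then have NKt: "Kt < ?N" by simp
    have xb: "x \<bullet> gradU x \<ge> m / 2 * ?N\<^sup>2"
    proof -
      have Npos: "0 < ?N" using NKt Kt0 by linarith
      have "2 * K \<le> Kt"
      proof -
        have "0 \<le> L / m" using L0 m_pos by simp
        then have "2 * K * 1 \<le> 2 * K * (1 + L / m)" using K_nonneg by (intro mult_left_mono) auto
        then show ?thesis unfolding Kt_def by simp
      qed
      then have KN: "K \<le> ?N" using NKt K_nonneg by linarith
      define t0 where "t0 = K / ?N"
      have t00: "0 \<le> t0" unfolding t0_def using K_nonneg by simp
      have t01: "t0 \<le> 1" unfolding t0_def using KN Npos by simp
      have Nt0: "?N\<^sup>2 * t0 = K * ?N" unfolding t0_def using Npos by (simp add: power2_eq_square)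
      define gg where "gg = (\<lambda>t. x \<bullet> gradU (t *\<^sub>R x))"
      have gd: "(gg has_real_derivative (x \<bullet> (hessU (t *\<^sub>R x) *v x))) (at t)" for t
      proof -
        have 1: "((\<lambda>t. t *\<^sub>R x) has_derivative (\<lambda>h. h *\<^sub>R x)) (at t)"
          by (auto intro!: derivative_eq_intros)
        have 2: "((\<lambda>t. gradU (t *\<^sub>R x)) has_derivative (\<lambda>h. hessU (t *\<^sub>R x) *v (h *\<^sub>R x))) (at t)"
          using has_derivative_compose[OF 1 hess] by (simp add: o_def)
        have 3: "(gg has_derivative (\<lambda>h. x \<bullet> (hessU (t *\<^sub>R x) *v (h *\<^sub>R x)))) (at t)"
          unfolding gg_def by (rule has_derivative_inner_right[OF 2])
        have 4: "(\<lambda>h. x \<bullet> (hessU (t *\<^sub>R x) *v (h *\<^sub>R x))) = (*) (x \<bullet> (hessU (t *\<^sub>R x) *v x))"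
          by (rule ext) (simp add: matrix_vector_mult_scaleR)
        show ?thesis using 3 unfolding 4 has_field_derivative_def .
      qed
      have g0: "gg 0 = 0" by (simp add: gg_def grad0)
      have g1: "gg 1 = x \<bullet> gradU x" by (simp add: gg_def)
      have lowD: "x \<bullet> (hessU p *v x) \<ge> - (L * ?N\<^sup>2)" for p
        using abs_le_D2[OF Hq[of x p]] by linarith
      have hiD: "x \<bullet> (hessU (t *\<^sub>R x) *v x) \<ge> m * ?N\<^sup>2" if "t0 \<le> t" for t
      proof -
        define u where "u = inverse ?N *\<^sub>R x"
        have nu: "norm u = 1" unfolding u_def using Npos by simp
        have xu: "x = ?N *\<^sub>R u" unfolding u_def using Npos by simp
        have "K \<le> t * ?N"
        proof -
          have "K = t0 * ?N" unfolding t0_def using Npos by simp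
          also have "\<dots> \<le> t * ?N" using that Npos by (intro mult_right_mono) auto
          finally show ?thesis .
        qed
        moreover have "norm (t *\<^sub>R x) = t * ?N" using that t00 by simp
        ultimately have Kn: "K \<le> norm (t *\<^sub>R x)" by linarith
        have mu: "m \<le> u \<bullet> (hessU (t *\<^sub>R x) *v u)" by (rule convex_out[OF Kn nu])
        have gen: "\<And>c v. (c *\<^sub>R v) \<bullet> (hessU (t *\<^sub>R x) *v (c *\<^sub>R v)) = c\<^sup>2 * (v \<bullet> (hessU (t *\<^sub>R x) *v v))"
          by (simp add: matrix_vector_mult_scaleR power2_eq_square)
        have eq: "?N\<^sup>2 * (u \<bullet> (hessU (t *\<^sub>R x) *v u)) = x \<bullet> (hessU (t *\<^sub>R x) *v x)"
          using gen[of "?N" u] unfolding xu[symmetric] by (rule sym)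
        have "?N\<^sup>2 * m \<le> ?N\<^sup>2 * (u \<bullet> (hessU (t *\<^sub>R x) *v u))" using mu by (intro mult_left_mono) auto
        then show ?thesis unfolding eq by (simp add: mult.commute)
      qed
      have s1: "gg 0 + L * ?N\<^sup>2 * 0 \<le> gg t0 + L * ?N\<^sup>2 * t0"
      proof (rule DERIV_nonneg_imp_nondecreasing[OF t00])
        fix t assume "0 \<le> t" "t \<le> t0"
        show "\<exists>y. ((\<lambda>t. gg t + L * ?N\<^sup>2 * t) has_real_derivative y) (at t) \<and> 0 \<le> y"
          using lowD[of "t *\<^sub>R x"]
          by (intro exI[of _ "x \<bullet> (hessU (t *\<^sub>R x) *v x) + L * ?N\<^sup>2"] conjI) (auto intro!: derivative_eq_intros gd)
      qed
      have s2: "gg t0 - m * ?N\<^sup>2 * t0 \<le> gg 1 - m * ?N\<^sup>2 * 1"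
      proof (rule DERIV_nonneg_imp_nondecreasing[OF t01])
        fix t assume "t0 \<le> t" "t \<le> 1"
        show "\<exists>y. ((\<lambda>t. gg t - m * ?N\<^sup>2 * t) has_real_derivative y) (at t) \<and> 0 \<le> y"
          using hiD[OF \<open>t0 \<le> t\<close>]
          by (intro exI[of _ "x \<bullet> (hessU (t *\<^sub>R x) *v x) - m * ?N\<^sup>2"] conjI) (auto intro!: derivative_eq_intros gd)
      qed
      have key: "x \<bullet> gradU x \<ge> m * ?N\<^sup>2 - (m + L) * (K * ?N)"
      proof -
        have "x \<bullet> gradU x \<ge> m * ?N\<^sup>2 - m * (?N\<^sup>2 * t0) - L * (?N\<^sup>2 * t0)"
          using s1 s2 g0 g1 by (simp add: algebra_simps)
        then show ?thesis unfolding Nt0 by (simp add: algebra_simps)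
      qed
      have "2 * K * (m + L) \<le> m * ?N"
      proof -
        have "2 * K * (m + L) = m * Kt" unfolding Kt_def using m_pos by (simp add: field_simps)
        also have "\<dots> \<le> m * ?N" using NKt m_pos by simp
        finally show ?thesis .
      qed
      then have "2 * K * (m + L) * ?N \<le> m * ?N * ?N" using Npos by (intro mult_right_mono) auto
      then have "(m + L) * (K * ?N) \<le> m / 2 * ?N\<^sup>2" by (simp add: power2_eq_square algebra_simps)
      then show ?thesis using key by linarith
    qed
    have d1: "- (2 * \<gamma> * (x \<bullet> gradU x)) \<le> - (2 * \<gamma> * (m / 2 * ?N\<^sup>2))"
    proof -
      have "2 * \<gamma> * (m / 2 * ?N\<^sup>2) \<le> 2 * \<gamma> * (x \<bullet> gradU x)"
        by (rule mult_left_mono[OF xb]) (use g in simp)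
      then show ?thesis by (simp only: neg_le_iff_le)
    qed
    have d2: "\<gamma>\<^sup>2 * (norm (gradU x))\<^sup>2 \<le> \<gamma> * (m / 4) * ?N\<^sup>2"
    proof -
      have "\<gamma>\<^sup>2 * (norm (gradU x))\<^sup>2 \<le> \<gamma>\<^sup>2 * (L\<^sup>2 * ?N\<^sup>2)" using gsq by (intro mult_left_mono) auto
      also have "\<dots> = (\<gamma>\<^sup>2 * L\<^sup>2) * ?N\<^sup>2" by (simp add: mult_ac)
      also have "\<dots> \<le> (\<gamma> * (m / 4)) * ?N\<^sup>2" using gL2 by (intro mult_right_mono) auto
      finally show ?thesis .
    qed
    have "(norm a)\<^sup>2 \<le> ?N\<^sup>2 - 2 * \<gamma> * (m / 2 * ?N\<^sup>2) + \<gamma> * (m / 4) * ?N\<^sup>2"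
      unfolding aexp using d1 d2 by linarith
    also have "\<dots> \<le> (1 - m * \<gamma> / 2) * ?N\<^sup>2"
      using g m_pos by (simp add: algebra_simps)
    also have "\<dots> \<le> (1 - m * \<gamma> / 2) * ?N\<^sup>2 + \<gamma> * (M\<^sup>2 * C)"
      using g C0 by simp
    finally show ?thesis .
  qed
  have lhs: "(\<integral>\<^sup>+ y. ennreal ((norm y)\<^sup>2) \<partial>ULA_kernel gradU \<gamma> x)
      = ennreal ((norm a)\<^sup>2 + (sqrt (2 * \<gamma>))\<^sup>2 * CARD('n))"
  proof -
    have "(\<integral>\<^sup>+ y. ennreal ((norm y)\<^sup>2) \<partial>ULA_kernel gradU \<gamma> x)
      = (\<integral>\<^sup>+ z. ennreal (std_gauss_dens z) * ennreal ((norm (x - \<gamma> *\<^sub>R gradU x + sqrt (2 * \<gamma>) *\<^sub>R z))\<^sup>2) \<partial>lborel)"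
      unfolding ULA_kernel_def
      by (subst nn_integral_distr) (auto simp: nn_integral_density)
    also have "\<dots> = ennreal ((norm a)\<^sup>2 + (sqrt (2 * \<gamma>))\<^sup>2 * CARD('n))"
      unfolding a_def by (rule gauss_shift)
    finally show ?thesis .
  qed
  have sq: "(sqrt (2 * \<gamma>))\<^sup>2 = 2 * \<gamma>" using g by simp
  have dist: "\<gamma> * (2 * real CARD('n) + M\<^sup>2 * C) = 2 * \<gamma> * real CARD('n) + \<gamma> * (M\<^sup>2 * C)"
    by (simp add: algebra_simps)
  have fin: "(norm a)\<^sup>2 + (sqrt (2 * \<gamma>))\<^sup>2 * real CARD('n) \<le> (1 - m * \<gamma> / 2) * ?N\<^sup>2 + \<gamma> * (2 * real CARD('n) + M\<^sup>2 * C)"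
    unfolding sq dist using main by linarith
  show ?thesis
    unfolding lhs M_def[symmetric] C_def[symmetric]
    by (rule ennreal_leI) (rule fin)
qed

end
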